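(* For every word $w\in\mathcal{M}_n^e$: \[ Q_+w=\sum_{T\subseteq E^y_w}(-1)^{|T|}\psi^y_Tw,\qquad Q_+^{-1}w=\sum_{w'\le w}w', \] \[ Q_-w=\sum_{T\subseteq E^x_w}(-1)^{|T|}\psi^x_Tw,\qquad Q_-^{-1}w=\sum_{w'\ge w}w', \] where the sums over $w'$ range over words in $\mathcal{M}_n^e$. In particular $Q_\pm$ and their inverses have integer coefficients.
   Context: $\mathcal{M}_n^e$ is the set of words in letters $x,y$ with $n_x$ $x$'s and $n_y$ $y$'s, $n=n_x+n_y$, $e=n_y-n_x$; $\mathcal{F}_n^e$ is its free $\mathbb{Z}$-span. Partial order: $w_0\le w_1$ iff for each $i$ the $i$-th $x$ of $w_0$ is at a position $\le$ that of the $i$-th $x$ of $w_1$. Bilinear form $\langle w_0|w_1\rangle=1$ if $w_0\le w_1$, else $0$; dot form $w_0\cdot w_1=1$ if $w_0=w_1$, else $0$. $Q_+,Q_-$ are the linear maps on $\mathcal{F}_n^e\otimes\mathbb{Q}$ with $u\cdot v=\langle u|Q_+v\rangle=\langle Q_-u|v\rangle$ for all $u,v$. $E^x_w$ is the set of occurrences of $x$ in $w$ immediately followed by a $y$; for $T\subseteq E^x_w$, $\psi^x_Tw$ replaces, for each $x\in T$, that $x$ and its following $y$ ($xy$) by $yx$. Similarly $E^y_w$ is the set of $y$'s immediately followed by an $x$, and $\psi^y_Tw$ replaces each such $yx$ ($y\in T$) by $xy$. *)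

theory Defs
  imports Complex_Main
begin

datatype letter = X | Y

type_synonym word = "letter list"

definition nocc :: "letter \<Rightarrow> word \<Rightarrow> nat" where
  "nocc a w = length (filter (\<lambda>c. c = a) w)"

definition Mset :: "nat \<Rightarrow> int \<Rightarrow> word set" where
  "Mset n e = {w. length w = n \<and> int (nocc Y w) - int (nocc X w) = e}"

(* positions (0-based) of the x's in w, in increasing order; the i-th entry
   is the position of the (i+1)-th x *)
definition xpositions :: "word \<Rightarrow> nat list" where
  "xpositions w = filter (\<lambda>j. w ! j = X) [0..<length w]"

definition wle :: "word \<Rightarrow> word \<Rightarrow> bool" where
  "wle w0 w1 \<longleftrightarrow> length (xpositions w0) = length (xpositions w1) \<and>
     (\<forall>i < length (xpositions w0). xpositions w0 ! i \<le> xpositions w1 ! i)"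

(* F_n^e \<otimes> Q: rational-valued coefficient functions supported on M_n^e *)
definition Vsp :: "nat \<Rightarrow> int \<Rightarrow> (word \<Rightarrow> rat) set" where
  "Vsp n e = {f. \<forall>w. w \<notin> Mset n e \<longrightarrow> f w = 0}"

definition delta :: "word \<Rightarrow> word \<Rightarrow> rat" where
  "delta w = (\<lambda>w'. if w' = w then 1 else 0)"

definition dotf :: "nat \<Rightarrow> int \<Rightarrow> (word \<Rightarrow> rat) \<Rightarrow> (word \<Rightarrow> rat) \<Rightarrow> rat" where
  "dotf n e u v = (\<Sum>w\<in>Mset n e. u w * v w)"

definition brak :: "nat \<Rightarrow> int \<Rightarrow> (word \<Rightarrow> rat) \<Rightarrow> (word \<Rightarrow> rat) \<Rightarrow> rat" where
  "brak n e u v = (\<Sum>w0\<in>Mset n e. \<Sum>w1\<in>Mset n e. if wle w0 w1 then u w0 * v w1 else 0)"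

definition linear_on_V :: "nat \<Rightarrow> int \<Rightarrow> ((word \<Rightarrow> rat) \<Rightarrow> (word \<Rightarrow> rat)) \<Rightarrow> bool" where
  "linear_on_V n e Q \<longleftrightarrow> (\<forall>v\<in>Vsp n e. Q v \<in> Vsp n e) \<and>
     (\<forall>a b. \<forall>u\<in>Vsp n e. \<forall>v\<in>Vsp n e.
        Q (\<lambda>w. a * u w + b * v w) = (\<lambda>w. a * Q u w + b * Q v w))"

definition is_Qplus :: "nat \<Rightarrow> int \<Rightarrow> ((word \<Rightarrow> rat) \<Rightarrow> (word \<Rightarrow> rat)) \<Rightarrow> bool" where
  "is_Qplus n e Q \<longleftrightarrow> linear_on_V n e Q \<and>
     (\<forall>u\<in>Vsp n e. \<forall>v\<in>Vsp n e. dotf n e u v = brak n e u (Q v))"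

definition is_Qminus :: "nat \<Rightarrow> int \<Rightarrow> ((word \<Rightarrow> rat) \<Rightarrow> (word \<Rightarrow> rat)) \<Rightarrow> bool" where
  "is_Qminus n e Q \<longleftrightarrow> linear_on_V n e Q \<and>
     (\<forall>u\<in>Vsp n e. \<forall>v\<in>Vsp n e. dotf n e u v = brak n e (Q u) v)"

definition Ex :: "word \<Rightarrow> nat set" where
  "Ex w = {i. Suc i < length w \<and> w ! i = X \<and> w ! Suc i = Y}"

definition Ey :: "word \<Rightarrow> nat set" where
  "Ey w = {i. Suc i < length w \<and> w ! i = Y \<and> w ! Suc i = X}"

(* swap the letters at positions i and i+1 for every i in T
   (for T \<subseteq> E^x_w this is psi^x_T, for T \<subseteq> E^y_w this is psi^y_T;
    such occurrences never overlap) *)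
definition psi :: "nat set \<Rightarrow> word \<Rightarrow> word" where
  "psi T w = map (\<lambda>j. if j \<in> T then w ! Suc j
                      else if 0 < j \<and> j - 1 \<in> T then w ! (j - 1)
                      else w ! j) [0..<length w]"

definition altsum :: "nat set \<Rightarrow> word \<Rightarrow> word \<Rightarrow> rat" where
  "altsum E w = (\<lambda>w'. \<Sum>T\<in>Pow E. (-1) ^ card T * (if psi T w = w' then 1 else 0))"

end

theory Submission
  imports Defs
begin

fun cnt :: "letter \<Rightarrow> word \<Rightarrow> nat \<Rightarrow> nat" where
  "cnt L w 0 = 0"
| "cnt L w (Suc j) = cnt L w j + (if j < length w \<and> w!j = L then 1 else 0)"

lemma other_letter: "(L::letter) \<noteq> L' \<Longrightarrow> x \<noteq> L \<Longrightarrow> x = L'"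
  by (cases x; cases L; cases L') auto

lemma cnt_card: "cnt L w j = card {i. i < j \<and> i < length w \<and> w!i = L}"
proof (induction j)
  case 0 then show ?case by simp
next
  case (Suc j)
  show ?case
  proof (cases "j < length w \<and> w!j = L")
    case True
    have "{i. i < Suc j \<and> i < length w \<and> w!i = L} = insert j {i. i < j \<and> i < length w \<and> w!i = L}"
      using True by auto
    then show ?thesis using True Suc by simp
  next
    case False
    have "{i. i < Suc j \<and> i < length w \<and> w!i = L} = {i. i < j \<and> i < length w \<and> w!i = L}"
      using False less_Suc_eq by auto
    then show ?thesis using False Suc by simp
  qed
qed

lemma cnt_ge: "length w \<le> j \<Longrightarrow> cnt L w j = cnt L w (length w)"
  by (induction j rule: dec_induct) auto

lemma cnt_len: "cnt L w (length w) = nocc L w"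
  unfolding nocc_def length_filter_conv_card cnt_card by (rule arg_cong[where f=card]) auto

lemma cnt_XY: "cnt X w j + cnt Y w j = min j (length w)"
proof (induction j)
  case (Suc j) then show ?case by (cases "w!j") auto
qed simp

lemma cnt_eq_word:
  assumes "length u = length v" "\<forall>j. cnt L u j = cnt L v j"
  shows "u = v"
proof (rule nth_equalityI)
  show "length u = length v" by fact
  fix i assume i: "i < length u"
  have h: "cnt L u i + (if u!i = L then 1 else 0) = cnt L v i + (if v!i = L then 1 else 0)"
    using assms(2)[rule_format, of "Suc i"] i assms(1) by simp
  have "cnt L u i = cnt L v i" using assms(2) by blast
  then have "(u!i = L) = (v!i = L)" using h by (auto split: if_splits)
  then show "u!i = v!i" by (cases "u!i"; cases "v!i"; cases L) auto
qed

lemma length_psi[simp]: "length (psi T w) = length w"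
  by (simp add: psi_def)

lemma nth_psi: "j < length w \<Longrightarrow> psi T w ! j = (if j \<in> T then w ! Suc j
                      else if 0 < j \<and> j - 1 \<in> T then w ! (j - 1) else w ! j)"
  unfolding psi_def by (subst nth_map) auto

lemma cnt_psi:
  assumes "L \<noteq> L'" "T \<subseteq> {t. Suc t < length w \<and> w!t = L' \<and> w!Suc t = L}"
  shows "cnt L (psi T w) j = cnt L w j + (if 0 < j \<and> j - 1 \<in> T then 1 else 0)"
proof (induction j)
  case 0 then show ?case by simp
next
  case (Suc j)
  show ?case
  proof (cases "j < length w")
    case False
    have "j \<notin> T" "\<not> (0 < j \<and> j - 1 \<in> T)" using assms False by auto
    then show ?thesis using Suc False by simp
  next
    case True
    show ?thesis
    proof (cases "j \<in> T")
      case jT: True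
      have "w!j = L'" "w ! Suc j = L" using assms jT by auto
      moreover have "\<not> (0 < j \<and> j - 1 \<in> T)"
      proof
        assume "0 < j \<and> j - 1 \<in> T"
        then have "w ! Suc (j-1) = L" using assms by auto
        with \<open>0 < j \<and> j - 1 \<in> T\<close> \<open>w!j = L'\<close> assms(1) show False by simp
      qed
      ultimately show ?thesis using Suc True jT assms(1) by (simp add: nth_psi)
    next
      case jT: False
      show ?thesis
      proof (cases "0 < j \<and> j - 1 \<in> T")
        case c: True
        have "w ! Suc (j-1) = L" "w ! (j-1) = L'" using assms c by auto
        then have "w!j = L" "w!(j-1) = L'" using c by auto
        then show ?thesis using Suc True jT c assms(1) by (simp add: nth_psi)
      next
        case c: False
        have e: "psi T w ! j = w ! j" using c jT nth_psi[OF True, of T] by (metis (full_types))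
        have "cnt L (psi T w) j = cnt L w j" using Suc c by simp
        then show ?thesis using e True jT by simp
      qed
    qed
  qed
qed

lemma nocc_psi:
  assumes "L \<noteq> L'" "T \<subseteq> {t. Suc t < length w \<and> w!t = L' \<and> w!Suc t = L}"
  shows "nocc L (psi T w) = nocc L w"
proof -
  have "\<not> (0 < length w \<and> length w - 1 \<in> T)" using assms(2) by auto
  then show ?thesis using cnt_psi[OF assms, of "length w"] by (simp add: cnt_len[symmetric])
qed

lemma nocc_XY: "nocc X w + nocc Y w = length w"
  using cnt_XY[of w "length w"] by (simp add: cnt_len)

lemma psi_Mset:
  assumes "L \<noteq> L'" "T \<subseteq> {t. Suc t < length w \<and> w!t = L' \<and> w!Suc t = L}" "w \<in> Mset n e"
  shows "psi T w \<in> Mset n e"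
proof -
  have a: "nocc L (psi T w) = nocc L w" by (rule nocc_psi[OF assms(1,2)])
  have "nocc X (psi T w) = nocc X w \<and> nocc Y (psi T w) = nocc Y w"
    using a nocc_XY[of w] nocc_XY[of "psi T w"] by (cases L) auto
  then show ?thesis using assms(3) by (simp add: Mset_def)
qed

lemma sorted_char:
  assumes p: "sorted_wrt (<) p" and q: "sorted_wrt (<) (q::nat list)" and l: "length p = length q"
  shows "(\<forall>i<length p. p!i \<le> q!i) \<longleftrightarrow>
         (\<forall>j. card {i. i < length q \<and> q!i < j} \<le> card {i. i < length p \<and> p!i < j})"
proof
  assume H: "\<forall>i<length p. p!i \<le> q!i"
  show "\<forall>j. card {i. i < length q \<and> q!i < j} \<le> card {i. i < length p \<and> p!i < j}"
  proof
    fix j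
    have "{i. i < length q \<and> q!i < j} \<subseteq> {i. i < length p \<and> p!i < j}"
    proof
      fix i assume a: "i \<in> {i. i < length q \<and> q!i < j}"
      then have "i < length p" using l by simp
      moreover have "p!i \<le> q!i" using H \<open>i < length p\<close> by blast
      ultimately show "i \<in> {i. i < length p \<and> p!i < j}" using a by simp
    qed
    then show "card {i. i < length q \<and> q!i < j} \<le> card {i. i < length p \<and> p!i < j}"
      by (intro card_mono) auto
  qed
next
  assume H: "\<forall>j. card {i. i < length q \<and> q!i < j} \<le> card {i. i < length p \<and> p!i < j}"
  show "\<forall>i<length p. p!i \<le> q!i"
  proof (intro allI impI, rule ccontr)
    fix i assume i: "i < length p" and nl: "\<not> p!i \<le> q!i"
    let ?j = "Suc (q!i)"
    have "{..i} \<subseteq> {i'. i' < length q \<and> q!i' < ?j}"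
    proof
      fix i' assume "i' \<in> {..i}"
      then have "i' \<le> i" by simp
      then have "q!i' \<le> q!i"
      proof (cases "i' = i")
        case False
        then have "i' < i" using \<open>i' \<le> i\<close> by simp
        moreover have "i < length q" using i l by simp
        ultimately show ?thesis using sorted_wrt_nth_less[OF q] by (simp add: less_imp_le)
      qed simp
      then show "i' \<in> {i'. i' < length q \<and> q!i' < ?j}" using \<open>i' \<le> i\<close> i l by auto
    qed
    then have "card {..i} \<le> card {i'. i' < length q \<and> q!i' < ?j}"
      by (intro card_mono) auto
    then have c1: "Suc i \<le> card {i'. i' < length q \<and> q!i' < ?j}" by simp
    have "{i'. i' < length p \<and> p!i' < ?j} \<subseteq> {..<i}"
    proof
      fix i' assume a: "i' \<in> {i'. i' < length p \<and> p!i' < ?j}"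
      show "i' \<in> {..<i}"
      proof (rule ccontr)
        assume "i' \<notin> {..<i}"
        then have "i \<le> i'" by simp
        then have "p!i \<le> p!i'"
        proof (cases "i' = i")
          case False
          then have "i < i'" using \<open>i \<le> i'\<close> by simp
          moreover have "i' < length p" using a by simp
          ultimately show ?thesis using sorted_wrt_nth_less[OF p] by (simp add: less_imp_le)
        qed simp
        then show False using a nl by auto
      qed
    qed
    then have "card {i'. i' < length p \<and> p!i' < ?j} \<le> card {..<i}"
      by (intro card_mono) auto
    then have c2: "card {i'. i' < length p \<and> p!i' < ?j} \<le> i" by simp
    have "card {i'. i' < length q \<and> q!i' < ?j} \<le> card {i'. i' < length p \<and> p!i' < ?j}"
      using H by blast
    with c1 c2 show False by linarith
  qed
qed

lemma xpos_sorted: "sorted_wrt (<) (xpositions w)"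
  unfolding xpositions_def by (intro sorted_wrt_filter) simp

lemma xpos_cnt: "card {i. i < length (xpositions w) \<and> xpositions w ! i < j} = cnt X w j"
proof -
  have "card {i. i < length (xpositions w) \<and> xpositions w ! i < j}
      = length (filter (\<lambda>x. x < j) (xpositions w))" by (simp add: length_filter_conv_card)
  also have "\<dots> = length (filter (\<lambda>i. w!i = X \<and> i < j) [0..<length w])"
    by (simp add: xpositions_def)
  also have "\<dots> = cnt X w j" unfolding length_filter_conv_card cnt_card
    by (rule arg_cong[where f=card]) auto
  finally show ?thesis .
qed

lemma xpos_len: "length (xpositions w) = nocc X w"
  unfolding xpositions_def nocc_def length_filter_conv_card by (rule arg_cong[where f=card]) auto

lemma wle_cnt:
  assumes "nocc X u = nocc X v"
  shows "wle u v \<longleftrightarrow> (\<forall>j. cnt X v j \<le> cnt X u j)"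
proof -
  have l: "length (xpositions u) = length (xpositions v)" by (simp add: xpos_len assms)
  have S: "(\<forall>i<length (xpositions u). xpositions u ! i \<le> xpositions v ! i) \<longleftrightarrow> (\<forall>j. cnt X v j \<le> cnt X u j)"
    using sorted_char[OF xpos_sorted xpos_sorted l] unfolding xpos_cnt .
  show ?thesis unfolding wle_def using l S by blast
qed

lemma Mset_noccX: "u \<in> Mset n e \<Longrightarrow> v \<in> Mset n e \<Longrightarrow> nocc X u = nocc X v"
  using nocc_XY[of u] nocc_XY[of v] by (simp add: Mset_def)

lemma wle_M:
  assumes "u \<in> Mset n e" "v \<in> Mset n e"
  shows "wle u v \<longleftrightarrow> (\<forall>j. cnt X v j \<le> cnt X u j)"
    and "wle u v \<longleftrightarrow> (\<forall>j. cnt Y u j \<le> cnt Y v j)"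
proof -
  show 1: "wle u v \<longleftrightarrow> (\<forall>j. cnt X v j \<le> cnt X u j)"
    using wle_cnt Mset_noccX[OF assms] by blast
  have "length u = length v" using assms by (simp add: Mset_def)
  then have "cnt X v j \<le> cnt X u j \<longleftrightarrow> cnt Y u j \<le> cnt Y v j" for j
    using cnt_XY[of u j] cnt_XY[of v j] by linarith
  then show "wle u v \<longleftrightarrow> (\<forall>j. cnt Y u j \<le> cnt Y v j)" using 1 by blast
qed

lemma alt_pow: "finite A \<Longrightarrow> (\<Sum>T\<in>Pow A. (-1::rat) ^ card T) = (if A = {} then 1 else 0)"
proof (induction A rule: finite_induct)
  case empty then show ?case by simp
next
  case (insert x A)
  have d: "Pow A \<inter> insert x ` Pow A = {}" using insert by auto
  have inj: "inj_on (insert x) (Pow A)" using insert unfolding inj_on_def by (metis Diff_insert_absorb PowD subsetD)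
  have "(\<Sum>T\<in>Pow (insert x A). (-1::rat) ^ card T)
      = (\<Sum>T\<in>Pow A. (-1::rat) ^ card T) + (\<Sum>T\<in>insert x ` Pow A. (-1::rat) ^ card T)"
    unfolding Pow_insert using insert d by (intro sum.union_disjoint) auto
  also have "(\<Sum>T\<in>insert x ` Pow A. (-1::rat) ^ card T) = (\<Sum>T\<in>Pow A. (-1::rat) ^ card (insert x T))"
    by (rule sum.reindex[OF inj, unfolded comp_def])
  also have "\<dots> = (\<Sum>T\<in>Pow A. - ((-1::rat) ^ card T))"
  proof (rule sum.cong[OF refl])
    fix T assume "T \<in> Pow A"
    then have "finite T" "x \<notin> T" using insert finite_subset by auto
    then show "(-1::rat) ^ card (insert x T) = - ((-1::rat) ^ card T)" by simp
  qed
  finally show ?case by (simp add: sum_negf)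
qed

lemma gap_forward:
  assumes LL: "L \<noteq> L'" and len: "length v = length w"
    and tot: "cnt L v (length w) = cnt L w (length w)"
    and E: "\<forall>t. Suc t < length w \<and> w!t = L' \<and> w!Suc t = L \<longrightarrow> cnt L v (Suc t) \<le> cnt L w (Suc t)"
    and j: "0 < j" "j \<le> length w" "cnt L w j < cnt L v j" "w!(j-1) = L'"
  shows False
proof -
  have "\<forall>m. j \<le> m \<longrightarrow> m \<le> length w \<longrightarrow> cnt L w m < cnt L v m \<and> w!(m-1) = L'"
  proof (intro allI impI)
    fix m assume "j \<le> m" "m \<le> length w"
    then show "cnt L w m < cnt L v m \<and> w!(m-1) = L'"
    proof (induction m rule: dec_induct)
      case base then show ?case using j by simp
    next
      case (step m)
      have m: "m < length w" using step by simp
      have "0 < m" using step j by simp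
      have "w!m \<noteq> L"
      proof
        assume "w!m = L"
        then have "Suc (m-1) < length w \<and> w!(m-1) = L' \<and> w!Suc (m-1) = L"
          using step m \<open>0 < m\<close> by simp
        then have "cnt L v m \<le> cnt L w m" using E \<open>0 < m\<close> by (metis Suc_pred')
        with step show False by simp
      qed
      then have "w!m = L'" using other_letter[OF LL] by blast
      then show ?case using step \<open>w!m \<noteq> L\<close> by simp
    qed
  qed
  then have "cnt L w (length w) < cnt L v (length w)" using j by blast
  then show False using tot by simp
qed

lemma gap:
  assumes LL: "L \<noteq> L'" and len: "length v = length w"
    and tot: "cnt L v (length w) = cnt L w (length w)"
    and base: "\<forall>j. cnt L w j \<le> cnt L v j"
    and E: "\<forall>t. Suc t < length w \<and> w!t = L' \<and> w!Suc t = L \<longrightarrow> cnt L v (Suc t) \<le> cnt L w (Suc t)"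
  shows "v = w"
proof -
  have le: "cnt L v j \<le> cnt L w j" for j
  proof (induction j)
    case 0 then show ?case by simp
  next
    case (Suc j)
    have eq: "cnt L v j = cnt L w j" using Suc base le_antisym by blast
    show ?case
    proof (rule ccontr)
      assume nl: "\<not> cnt L v (Suc j) \<le> cnt L w (Suc j)"
      then have jl: "j < length w" and vj: "v!j = L" and wj: "w!j \<noteq> L"
        using eq len by (auto split: if_splits)
      have "w!j = L'" using other_letter[OF LL wj] .
      show False
        by (rule gap_forward[OF LL len tot E, of "Suc j"]) (use jl nl \<open>w!j = L'\<close> in auto)
    qed
  qed
  have "\<forall>j. cnt L v j = cnt L w j" using le base le_antisym by blast
  then show ?thesis using cnt_eq_word[OF len] by blast
qed

lemma key:
  assumes LL: "L \<noteq> L'" and len: "length v = length w"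
    and tot: "nocc L v = nocc L w"
    and Edef: "E = {t. Suc t < length w \<and> w!t = L' \<and> w!Suc t = L}"
  shows "(\<Sum>T\<in>Pow E. (-1::rat)^card T * (if \<forall>j. cnt L (psi T w) j \<le> cnt L v j then 1 else 0))
        = (if v = w then 1 else 0)"
proof -
  define G where "G = {t. cnt L w (Suc t) < cnt L v (Suc t)}"
  define base where "base = (\<forall>j. cnt L w j \<le> cnt L v j)"
  have finE: "finite E" unfolding Edef by (rule finite_subset[of _ "{..<length w}"]) auto
  have cond: "(\<forall>j. cnt L (psi T w) j \<le> cnt L v j) \<longleftrightarrow> base \<and> T \<subseteq> G" if T: "T \<in> Pow E" for T
  proof -
    have TE: "T \<subseteq> {t. Suc t < length w \<and> w!t = L' \<and> w!Suc t = L}" using T Edef by auto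
    note cp = cnt_psi[OF LL TE]
    show ?thesis
    proof
      assume H: "\<forall>j. cnt L (psi T w) j \<le> cnt L v j"
      have "base" unfolding base_def using H cp by (metis le_add1 le_trans)
      moreover have "T \<subseteq> G"
      proof
        fix t assume "t \<in> T"
        then show "t \<in> G" using H[rule_format, of "Suc t"] cp[of "Suc t"] unfolding G_def by simp
      qed
      ultimately show "base \<and> T \<subseteq> G" by blast
    next
      assume H: "base \<and> T \<subseteq> G"
      show "\<forall>j. cnt L (psi T w) j \<le> cnt L v j"
      proof
        fix j
        show "cnt L (psi T w) j \<le> cnt L v j"
        proof (cases "0 < j \<and> j - 1 \<in> T")
          case True
          then have "j - 1 \<in> G" using H by blast
          then have "cnt L w (Suc (j-1)) < cnt L v (Suc (j-1))" by (simp add: G_def del: cnt.simps)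
          moreover have "Suc (j-1) = j" using True by simp
          ultimately show ?thesis using cp[of j] True by simp
        next
          case False
          have "cnt L (psi T w) j = cnt L w j" using cp[of j, unfolded if_not_P[OF False]] by simp
          then show ?thesis using H unfolding base_def by simp
        qed
      qed
    qed
  qed
  have "(\<Sum>T\<in>Pow E. (-1::rat)^card T * (if \<forall>j. cnt L (psi T w) j \<le> cnt L v j then 1 else 0))
      = (\<Sum>T\<in>Pow E. (if base then (if T \<subseteq> G then (-1::rat)^card T else 0) else 0))"
    by (rule sum.cong[OF refl]) (simp add: cond)
  also have "\<dots> = (if base then (\<Sum>T\<in>Pow E. (if T \<subseteq> G then (-1::rat)^card T else 0)) else 0)"
    by simp
  also have "(\<Sum>T\<in>Pow E. (if T \<subseteq> G then (-1::rat)^card T else 0)) = (\<Sum>T\<in>{T\<in>Pow E. T \<subseteq> G}. (-1::rat)^card T)"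
    by (rule sum.inter_filter[symmetric]) (simp add: finE)
  also have "{T\<in>Pow E. T \<subseteq> G} = Pow (E \<inter> G)" by auto
  also have "(\<Sum>T\<in>Pow (E \<inter> G). (-1::rat)^card T) = (if E \<inter> G = {} then 1 else 0)"
    by (rule alt_pow) (simp add: finE)
  finally have S: "(\<Sum>T\<in>Pow E. (-1::rat)^card T * (if \<forall>j. cnt L (psi T w) j \<le> cnt L v j then 1 else 0))
      = (if base \<and> E \<inter> G = {} then 1 else 0)" by simp
  have "base \<and> E \<inter> G = {} \<longleftrightarrow> v = w"
  proof
    assume H: "base \<and> E \<inter> G = {}"
    show "v = w"
    proof (rule gap[OF LL len])
      show "cnt L v (length w) = cnt L w (length w)" using tot len cnt_len[of L v] cnt_len[of L w] by simp
      show "\<forall>j. cnt L w j \<le> cnt L v j" using H base_def by blast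
      show "\<forall>t. Suc t < length w \<and> w ! t = L' \<and> w ! Suc t = L \<longrightarrow> cnt L v (Suc t) \<le> cnt L w (Suc t)"
        using H unfolding Edef G_def by auto
    qed
  next
    assume "v = w" then show "base \<and> E \<inter> G = {}" unfolding base_def G_def by auto
  qed
  then show ?thesis using S by simp
qed

definition Sop :: "word set \<Rightarrow> (word \<Rightarrow> word \<Rightarrow> bool) \<Rightarrow> (word \<Rightarrow> rat) \<Rightarrow> word \<Rightarrow> rat" where
  "Sop M R f = (\<lambda>a. if a \<in> M then (\<Sum>b\<in>{b\<in>M. R a b}. f b) else 0)"

definition VV :: "word set \<Rightarrow> (word \<Rightarrow> rat) set" where
  "VV M = {f. \<forall>w. w \<notin> M \<longrightarrow> f w = 0}"

definition Q0 :: "word set \<Rightarrow> (word \<Rightarrow> word \<Rightarrow> rat) \<Rightarrow> (word \<Rightarrow> rat) \<Rightarrow> word \<Rightarrow> rat" where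
  "Q0 M A v = (\<lambda>a. \<Sum>w\<in>M. v w * A w a)"

lemma Sop_VV: "Sop M R f \<in> VV M" by (simp add: Sop_def VV_def)

lemma Sop_inj0:
  fixes \<phi> :: "word \<Rightarrow> int"
  assumes fin: "finite M" and refl: "\<forall>a\<in>M. R a a"
    and pot: "\<forall>a\<in>M. \<forall>b\<in>M. R a b \<and> a \<noteq> b \<longrightarrow> \<phi> a < \<phi> b"
    and f: "f \<in> VV M" and z: "\<forall>a. Sop M R f a = 0"
  shows "f = (\<lambda>_. 0)"
proof (rule ccontr)
  assume "f \<noteq> (\<lambda>_. 0)"
  then obtain x where "f x \<noteq> 0" by auto
  define A where "A = {w\<in>M. f w \<noteq> 0}"
  have "x \<in> A" using \<open>f x \<noteq> 0\<close> f unfolding A_def VV_def by auto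
  have finA: "finite A" using fin A_def by simp
  have ne: "\<phi> ` A \<noteq> {}" using \<open>x \<in> A\<close> by blast
  have "Max (\<phi> ` A) \<in> \<phi> ` A" using finA ne by (intro Max_in) auto
  then obtain m where mA: "m \<in> A" and mm: "\<phi> m = Max (\<phi> ` A)" by auto
  have mx: "\<forall>b\<in>A. \<phi> b \<le> \<phi> m" using finA mm by simp
  have mM: "m \<in> M" using mA A_def by simp
  have "Sop M R f m = (\<Sum>b\<in>{b\<in>M. R m b}. f b)" using mM by (simp add: Sop_def)
  also have "\<dots> = (\<Sum>b\<in>{m}. f b)"
  proof (rule sum.mono_neutral_right)
    show "finite {b\<in>M. R m b}" using fin by simp
    show "{m} \<subseteq> {b\<in>M. R m b}" using mM refl by simp
    show "\<forall>b\<in>{b\<in>M. R m b} - {m}. f b = 0"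
    proof
      fix b assume b: "b \<in> {b\<in>M. R m b} - {m}"
      then have "\<phi> m < \<phi> b" using pot mM by auto
      then have "b \<notin> A" using mx by force
      then show "f b = 0" using b A_def by simp
    qed
  qed
  also have "\<dots> = f m" by simp
  finally have "f m = 0" using z by simp
  then show False using mA A_def by simp
qed

lemma Sop_diff: "finite M \<Longrightarrow> Sop M R (\<lambda>x. f x - g x) a = Sop M R f a - Sop M R g a"
  by (simp add: Sop_def sum_subtractf)

lemma Sop_inj:
  fixes \<phi> :: "word \<Rightarrow> int"
  assumes fin: "finite M" and refl: "\<forall>a\<in>M. R a a"
    and pot: "\<forall>a\<in>M. \<forall>b\<in>M. R a b \<and> a \<noteq> b \<longrightarrow> \<phi> a < \<phi> b"
    and f: "f \<in> VV M" and g: "g \<in> VV M" and eq: "Sop M R f = Sop M R g"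
  shows "f = g"
proof -
  have "(\<lambda>x. f x - g x) = (\<lambda>_. 0)"
    by (rule Sop_inj0[OF fin refl pot]) (use f g eq Sop_diff[OF fin] in \<open>auto simp: VV_def\<close>)
  then show ?thesis by (simp add: fun_eq_iff)
qed

lemma Sop_Q0:
  assumes fin: "finite M" and A: "\<forall>w\<in>M. Sop M R (A w) = delta w" and v: "v \<in> VV M"
  shows "Sop M R (Q0 M A v) = v"
proof
  fix a
  show "Sop M R (Q0 M A v) a = v a"
  proof (cases "a \<in> M")
    case False then show ?thesis using v by (simp add: Sop_def VV_def)
  next
    case True
    have "Sop M R (Q0 M A v) a = (\<Sum>b\<in>{b\<in>M. R a b}. \<Sum>w\<in>M. v w * A w b)"
      using True by (simp add: Sop_def Q0_def)
    also have "\<dots> = (\<Sum>w\<in>M. v w * (\<Sum>b\<in>{b\<in>M. R a b}. A w b))"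
      by (subst sum.swap) (simp add: sum_distrib_left)
    also have "\<dots> = (\<Sum>w\<in>M. v w * delta w a)"
    proof (rule sum.cong[OF refl])
      fix w assume "w \<in> M"
      then have "Sop M R (A w) a = delta w a" using A by simp
      then show "v w * (\<Sum>b\<in>{b\<in>M. R a b}. A w b) = v w * delta w a"
        using True by (simp add: Sop_def)
    qed
    also have "\<dots> = (\<Sum>w\<in>M. if a = w then v w else 0)"
      by (rule sum.cong[OF refl]) (simp add: delta_def)
    also have "\<dots> = v a" using True fin by (simp add: sum.delta)
    finally show ?thesis .
  qed
qed

lemma Q0_VV: "\<forall>w\<in>M. A w \<in> VV M \<Longrightarrow> Q0 M A v \<in> VV M"
  by (simp add: Q0_def VV_def)

lemma final:
  fixes \<phi> :: "word \<Rightarrow> int"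
  assumes fin: "finite M" and refl: "\<forall>a\<in>M. R a a"
    and pot: "\<forall>a\<in>M. \<forall>b\<in>M. R a b \<and> a \<noteq> b \<longrightarrow> \<phi> a < \<phi> b"
    and AV: "\<forall>w\<in>M. A w \<in> VV M" and A: "\<forall>w\<in>M. Sop M R (A w) = delta w"
    and Q: "\<forall>v\<in>VV M. Q v \<in> VV M \<and> Sop M R (Q v) = v"
  shows "bij_betw Q (VV M) (VV M) \<and> (\<forall>w\<in>M. Q (delta w) = A w \<and> Q (Sop M R (delta w)) = delta w)"
proof -
  note inj = Sop_inj[OF fin refl pot]
  have dV: "w \<in> M \<Longrightarrow> delta w \<in> VV M" for w by (auto simp: delta_def VV_def)
  have QS: "Q (Sop M R f) = f" if f: "f \<in> VV M" for f
  proof -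
    have "Q (Sop M R f) \<in> VV M" "Sop M R (Q (Sop M R f)) = Sop M R f" using Q Sop_VV by blast+
    then show ?thesis using inj[OF _ f] by blast
  qed
  have "inj_on Q (VV M)"
  proof (rule inj_onI)
    fix u v assume u: "u \<in> VV M" and v: "v \<in> VV M" and e: "Q u = Q v"
    have "u = Sop M R (Q u)" using Q u by simp
    also have "\<dots> = Sop M R (Q v)" using e by simp
    also have "\<dots> = v" using Q v by simp
    finally show "u = v" .
  qed
  moreover have "Q ` VV M = VV M"
  proof
    show "Q ` VV M \<subseteq> VV M" using Q by auto
    show "VV M \<subseteq> Q ` VV M"
    proof
      fix f assume "f \<in> VV M"
      then have "f = Q (Sop M R f)" using QS by simp
      then show "f \<in> Q ` VV M" using Sop_VV by blast
    qed
  qed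
  moreover have "Q (delta w) = A w" if w: "w \<in> M" for w
  proof -
    have a: "Q (delta w) \<in> VV M" "Sop M R (Q (delta w)) = delta w" using Q dV[OF w] by blast+
    have b: "A w \<in> VV M" "Sop M R (A w) = delta w" using AV A w by blast+
    show ?thesis by (rule inj[OF a(1) b(1)]) (simp add: a(2) b(2))
  qed
  ultimately show ?thesis using QS dV by (simp add: bij_betw_def)
qed

lemma finite_Mset: "finite (Mset n e)"
proof (rule finite_subset)
  show "Mset n e \<subseteq> {xs. set xs \<subseteq> {X, Y} \<and> length xs = n}"
  proof
    fix xs assume "xs \<in> Mset n e"
    moreover have "set xs \<subseteq> {X, Y}" by (auto intro: letter.exhaust)
    ultimately show "xs \<in> {xs. set xs \<subseteq> {X, Y} \<and> length xs = n}" by (simp add: Mset_def)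
  qed
  show "finite {xs. set xs \<subseteq> {X, Y} \<and> length xs = n}" by (rule finite_lists_length_eq) simp
qed

lemma Vsp_VV: "Vsp n e = VV (Mset n e)" by (simp add: Vsp_def VV_def)

lemma brak_plus: "brak n e u g = (\<Sum>a\<in>Mset n e. u a * Sop (Mset n e) wle g a)"
  unfolding brak_def
proof (rule sum.cong[OF refl])
  fix a assume a: "a \<in> Mset n e"
  have "(\<Sum>w1\<in>Mset n e. if wle a w1 then u a * g w1 else 0) = (\<Sum>w1\<in>{b\<in>Mset n e. wle a b}. u a * g w1)"
    by (rule sum.inter_filter[symmetric]) (simp add: finite_Mset)
  also have "\<dots> = u a * Sop (Mset n e) wle g a" using a by (simp add: Sop_def sum_distrib_left)
  finally show "(\<Sum>w1\<in>Mset n e. if wle a w1 then u a * g w1 else 0) = u a * Sop (Mset n e) wle g a" .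
qed

lemma brak_minus: "brak n e g v = (\<Sum>b\<in>Mset n e. v b * Sop (Mset n e) (\<lambda>a b. wle b a) g b)"
  unfolding brak_def
  apply (subst sum.swap)
proof (rule sum.cong[OF refl])
  fix b assume b: "b \<in> Mset n e"
  have "(\<Sum>w0\<in>Mset n e. if wle w0 b then g w0 * v b else 0) = (\<Sum>w0\<in>{a\<in>Mset n e. wle a b}. g w0 * v b)"
    by (rule sum.inter_filter[symmetric]) (simp add: finite_Mset)
  also have "\<dots> = v b * Sop (Mset n e) (\<lambda>a b. wle b a) g b" using b
    by (simp add: Sop_def sum_distrib_left mult.commute)
  finally show "(\<Sum>w0\<in>Mset n e. if wle w0 b then g w0 * v b else 0) = v b * Sop (Mset n e) (\<lambda>a b. wle b a) g b" .
qed

lemma dV: "w \<in> M \<Longrightarrow> delta w \<in> VV M" by (auto simp: delta_def VV_def)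

lemma dot_delta: "a \<in> Mset n e \<Longrightarrow> (\<Sum>w\<in>Mset n e. delta a w * f w) = f a"
proof -
  assume a: "a \<in> Mset n e"
  have "(\<Sum>w\<in>Mset n e. delta a w * f w) = (\<Sum>w\<in>Mset n e. if w = a then f w else 0)"
    by (rule sum.cong[OF refl]) (simp add: delta_def)
  also have "\<dots> = f a" using a finite_Mset by simp
  finally show ?thesis .
qed

lemma plus_char:
  assumes "is_Qplus n e Q"
  shows "\<forall>v\<in>VV (Mset n e). Q v \<in> VV (Mset n e) \<and> Sop (Mset n e) wle (Q v) = v"
proof
  fix v assume v: "v \<in> VV (Mset n e)"
  have QV: "Q v \<in> VV (Mset n e)" using assms v unfolding is_Qplus_def linear_on_V_def Vsp_VV by blast
  have "Sop (Mset n e) wle (Q v) a = v a" for a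
  proof (cases "a \<in> Mset n e")
    case False then show ?thesis using v by (simp add: Sop_def VV_def)
  next
    case True
    have "dotf n e (delta a) v = brak n e (delta a) (Q v)"
      using assms v dV[OF True] unfolding is_Qplus_def Vsp_VV by blast
    then show ?thesis using True by (simp add: dotf_def brak_plus dot_delta)
  qed
  then show "Q v \<in> VV (Mset n e) \<and> Sop (Mset n e) wle (Q v) = v" using QV by auto
qed

lemma minus_char:
  assumes "is_Qminus n e Q"
  shows "\<forall>v\<in>VV (Mset n e). Q v \<in> VV (Mset n e) \<and> Sop (Mset n e) (\<lambda>a b. wle b a) (Q v) = v"
proof
  fix v assume v: "v \<in> VV (Mset n e)"
  have QV: "Q v \<in> VV (Mset n e)" using assms v unfolding is_Qminus_def linear_on_V_def Vsp_VV by blast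
  have "Sop (Mset n e) (\<lambda>a b. wle b a) (Q v) a = v a" for a
  proof (cases "a \<in> Mset n e")
    case False then show ?thesis using v by (simp add: Sop_def VV_def)
  next
    case True
    have "dotf n e v (delta a) = brak n e (Q v) (delta a)"
      using assms v dV[OF True] unfolding is_Qminus_def Vsp_VV by blast
    moreover have "dotf n e v (delta a) = v a"
      using dot_delta[OF True, of v] by (simp add: dotf_def mult.commute)
    ultimately show ?thesis using True by (simp add: brak_minus dot_delta)
  qed
  then show "Q v \<in> VV (Mset n e) \<and> Sop (Mset n e) (\<lambda>a b. wle b a) (Q v) = v" using QV by auto
qed

lemma Q0_lin: "Q0 M A (\<lambda>w. a * u w + b * v w) = (\<lambda>x. a * Q0 M A u x + b * Q0 M A v x)"
  by (simp add: Q0_def fun_eq_iff sum.distrib sum_distrib_left distrib_right mult.assoc)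

lemma Sop_altsum:
  assumes "finite E" "\<forall>T\<in>Pow E. psi T w \<in> M" "finite M"
  shows "Sop M R (altsum E w) a =
    (if a \<in> M then (\<Sum>T\<in>Pow E. (-1)^card T * (if R a (psi T w) then 1 else 0)) else 0)"
proof (cases "a \<in> M")
  case True
  have "Sop M R (altsum E w) a = (\<Sum>b\<in>{b\<in>M. R a b}. \<Sum>T\<in>Pow E. (-1)^card T * (if psi T w = b then 1 else 0))"
    using True by (simp add: Sop_def altsum_def)
  also have "\<dots> = (\<Sum>T\<in>Pow E. (-1)^card T * (\<Sum>b\<in>{b\<in>M. R a b}. (if psi T w = b then 1 else 0)))"
    by (subst sum.swap) (simp add: sum_distrib_left)
  also have "\<dots> = (\<Sum>T\<in>Pow E. (-1)^card T * (if R a (psi T w) then 1 else 0))"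
  proof (rule sum.cong[OF refl])
    fix T assume "T \<in> Pow E"
    then have "psi T w \<in> M" using assms by blast
    then show "(-1)^card T * (\<Sum>b\<in>{b\<in>M. R a b}. (if psi T w = b then 1 else 0)) =
               (-1::rat)^card T * (if R a (psi T w) then 1 else 0)"
      using assms(3) by simp
  qed
  finally show ?thesis using True by simp
qed (simp add: Sop_def)

lemma finite_Ey: "finite (Ey w)" unfolding Ey_def by (rule finite_subset[of _ "{..<length w}"]) auto
lemma finite_Ex: "finite (Ex w)" unfolding Ex_def by (rule finite_subset[of _ "{..<length w}"]) auto

lemma psi_Ey: "w \<in> Mset n e \<Longrightarrow> \<forall>T\<in>Pow (Ey w). psi T w \<in> Mset n e"
  by (intro ballI psi_Mset[of X Y]) (auto simp: Ey_def)
lemma psi_Ex: "w \<in> Mset n e \<Longrightarrow> \<forall>T\<in>Pow (Ex w). psi T w \<in> Mset n e"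
  by (intro ballI psi_Mset[of Y X]) (auto simp: Ex_def)

lemma altsum_VV:
  assumes "\<forall>T\<in>Pow E. psi T w \<in> M"
  shows "altsum E w \<in> VV M"
proof -
  have "altsum E w w' = 0" if "w' \<notin> M" for w'
  proof -
    have "\<forall>T\<in>Pow E. psi T w \<noteq> w'" using assms that by blast
    then show ?thesis unfolding altsum_def by simp
  qed
  then show ?thesis by (simp add: VV_def)
qed

lemma A_plus:
  assumes w: "w \<in> Mset n e"
  shows "Sop (Mset n e) wle (altsum (Ey w) w) = delta w"
proof
  fix a
  show "Sop (Mset n e) wle (altsum (Ey w) w) a = delta w a"
  proof (cases "a \<in> Mset n e")
    case False
    then have "a \<noteq> w" using w by blast
    then show ?thesis using False Sop_altsum[OF finite_Ey psi_Ey[OF w] finite_Mset] by (simp add: delta_def)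
  next
    case True
    have "(\<Sum>T\<in>Pow (Ey w). (-1::rat)^card T * (if wle a (psi T w) then 1 else 0))
        = (\<Sum>T\<in>Pow (Ey w). (-1::rat)^card T * (if \<forall>j. cnt X (psi T w) j \<le> cnt X a j then 1 else 0))"
    proof (rule sum.cong[OF refl])
      fix T assume "T \<in> Pow (Ey w)"
      then have "psi T w \<in> Mset n e" using psi_Ey[OF w] by blast
      then show "(-1::rat)^card T * (if wle a (psi T w) then 1 else 0) =
                 (-1::rat)^card T * (if \<forall>j. cnt X (psi T w) j \<le> cnt X a j then 1 else 0)"
        using wle_M(1)[OF True] by simp
    qed
    also have "\<dots> = (if a = w then 1 else 0)"
    proof (rule key)
      show "X \<noteq> Y" by simp
      show "length a = length w" using True w by (simp add: Mset_def)
      show "nocc X a = nocc X w" using Mset_noccX[OF True w] .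
      show "Ey w = {t. Suc t < length w \<and> w ! t = Y \<and> w ! Suc t = X}" by (simp add: Ey_def)
    qed
    finally show ?thesis using True Sop_altsum[OF finite_Ey psi_Ey[OF w] finite_Mset]
      by (simp add: delta_def)
  qed
qed

lemma A_minus:
  assumes w: "w \<in> Mset n e"
  shows "Sop (Mset n e) (\<lambda>a b. wle b a) (altsum (Ex w) w) = delta w"
proof
  fix a
  show "Sop (Mset n e) (\<lambda>a b. wle b a) (altsum (Ex w) w) a = delta w a"
  proof (cases "a \<in> Mset n e")
    case False
    then have "a \<noteq> w" using w by blast
    then show ?thesis using False Sop_altsum[OF finite_Ex psi_Ex[OF w] finite_Mset] by (simp add: delta_def)
  next
    case True
    have "(\<Sum>T\<in>Pow (Ex w). (-1::rat)^card T * (if wle (psi T w) a then 1 else 0))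
        = (\<Sum>T\<in>Pow (Ex w). (-1::rat)^card T * (if \<forall>j. cnt Y (psi T w) j \<le> cnt Y a j then 1 else 0))"
    proof (rule sum.cong[OF refl])
      fix T assume "T \<in> Pow (Ex w)"
      then have "psi T w \<in> Mset n e" using psi_Ex[OF w] by blast
      then show "(-1::rat)^card T * (if wle (psi T w) a then 1 else 0) =
                 (-1::rat)^card T * (if \<forall>j. cnt Y (psi T w) j \<le> cnt Y a j then 1 else 0)"
        using wle_M(2)[OF _ True] by simp
    qed
    also have "\<dots> = (if a = w then 1 else 0)"
    proof (rule key)
      show "Y \<noteq> X" by simp
      show l: "length a = length w" using True w by (simp add: Mset_def)
      show "nocc Y a = nocc Y w" using Mset_noccX[OF True w] nocc_XY[of a] nocc_XY[of w] l by simp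
      show "Ex w = {t. Suc t < length w \<and> w ! t = X \<and> w ! Suc t = Y}" by (simp add: Ex_def)
    qed
    finally show ?thesis using True Sop_altsum[OF finite_Ex psi_Ex[OF w] finite_Mset]
      by (simp add: delta_def)
  qed
qed

lemma pot_aux:
  assumes a: "a \<in> Mset n e" and b: "b \<in> Mset n e" and le: "\<forall>j. cnt X b j \<le> cnt X a j" and ne: "a \<noteq> b"
  shows "(\<Sum>j\<le>n. cnt X b j) < (\<Sum>j\<le>n. cnt X a j)"
proof (rule sum_strict_mono_ex1)
  show "finite {..n}" by simp
  show "\<forall>x\<in>{..n}. cnt X b x \<le> cnt X a x" using le by blast
  have la: "length a = n" and lb: "length b = n" using a b by (auto simp: Mset_def)
  obtain j where j: "cnt X b j \<noteq> cnt X a j" using cnt_eq_word[of b a X] la lb ne by auto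
  show "\<exists>j\<in>{..n}. cnt X b j < cnt X a j"
  proof (cases "j \<le> n")
    case True then show ?thesis using j le by (auto intro!: bexI[of _ j] simp: order_less_le)
  next
    case False
    then have "cnt X b j = cnt X b n" "cnt X a j = cnt X a n"
      using cnt_ge[of b j X] cnt_ge[of a j X] la lb by auto
    then show ?thesis using j le by (auto intro!: bexI[of _ n] simp: order_less_le)
  qed
qed

theorem mainTheorem5:
  fixes n :: nat and e :: int
  shows "(\<exists>Q. is_Qplus n e Q) \<and> (\<exists>Q. is_Qminus n e Q) \<and>
    (\<forall>Q. is_Qplus n e Q \<longrightarrow>
       bij_betw Q (Vsp n e) (Vsp n e) \<and>
       (\<forall>w\<in>Mset n e.
          Q (delta w) = altsum (Ey w) w \<and>
          Q (\<lambda>w'. if w' \<in> Mset n e \<and> wle w' w then 1 else 0) = delta w \<and>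
          (\<forall>w'. Q (delta w) w' \<in> \<int>))) \<and>
    (\<forall>Q. is_Qminus n e Q \<longrightarrow>
       bij_betw Q (Vsp n e) (Vsp n e) \<and>
       (\<forall>w\<in>Mset n e.
          Q (delta w) = altsum (Ex w) w \<and>
          Q (\<lambda>w'. if w' \<in> Mset n e \<and> wle w w' then 1 else 0) = delta w \<and>
          (\<forall>w'. Q (delta w) w' \<in> \<int>)))"
proof -
  let ?M = "Mset n e"
  define Ap where "Ap = (\<lambda>w. altsum (Ey w) w)"
  define Am where "Am = (\<lambda>w. altsum (Ex w) w)"
  have ApV: "\<forall>w\<in>?M. Ap w \<in> VV ?M" unfolding Ap_def by (intro ballI altsum_VV psi_Ey)
  have AmV: "\<forall>w\<in>?M. Am w \<in> VV ?M" unfolding Am_def by (intro ballI altsum_VV psi_Ex)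
  have ApS: "\<forall>w\<in>?M. Sop ?M wle (Ap w) = delta w" unfolding Ap_def by (intro ballI A_plus)
  have AmS: "\<forall>w\<in>?M. Sop ?M (\<lambda>a b. wle b a) (Am w) = delta w" unfolding Am_def by (intro ballI A_minus)
  have reflp: "\<forall>a\<in>?M. wle a a" by (simp add: wle_def)
  have reflm: "\<forall>a\<in>?M. (\<lambda>a b. wle b a) a a" by (simp add: wle_def)
  define \<phi>p :: "word \<Rightarrow> int" where "\<phi>p = (\<lambda>c. - int (\<Sum>j\<le>n. cnt X c j))"
  define \<phi>m :: "word \<Rightarrow> int" where "\<phi>m = (\<lambda>c. int (\<Sum>j\<le>n. cnt X c j))"
  have potp: "\<forall>a\<in>?M. \<forall>b\<in>?M. wle a b \<and> a \<noteq> b \<longrightarrow> \<phi>p a < \<phi>p b"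
  proof (intro ballI impI)
    fix a b assume a: "a \<in> ?M" and b: "b \<in> ?M" and h: "wle a b \<and> a \<noteq> b"
    have "\<forall>j. cnt X b j \<le> cnt X a j" using h wle_M(1)[OF a b] by simp
    then have "(\<Sum>j\<le>n. cnt X b j) < (\<Sum>j\<le>n. cnt X a j)" using h by (intro pot_aux[OF a b]) auto
    then show "\<phi>p a < \<phi>p b" unfolding \<phi>p_def by (simp del: of_nat_sum)
  qed
  have potm: "\<forall>a\<in>?M. \<forall>b\<in>?M. (\<lambda>a b. wle b a) a b \<and> a \<noteq> b \<longrightarrow> \<phi>m a < \<phi>m b"
  proof (intro ballI impI)
    fix a b assume a: "a \<in> ?M" and b: "b \<in> ?M" and h: "(\<lambda>a b. wle b a) a b \<and> a \<noteq> b"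
    have "\<forall>j. cnt X a j \<le> cnt X b j" using h wle_M(1)[OF b a] by simp
    then have "(\<Sum>j\<le>n. cnt X a j) < (\<Sum>j\<le>n. cnt X b j)" using h by (intro pot_aux[OF b a]) auto
    then show "\<phi>m a < \<phi>m b" unfolding \<phi>m_def by (simp del: of_nat_sum)
  qed
  have ints: "altsum E w w' \<in> \<int>" for E w w'
    unfolding altsum_def by (intro Ints_sum Ints_mult Ints_power) auto
  have exp: "is_Qplus n e (Q0 ?M Ap)"
    unfolding is_Qplus_def linear_on_V_def Vsp_VV
  proof (intro conjI ballI allI)
    fix v assume "v \<in> VV ?M" then show "Q0 ?M Ap v \<in> VV ?M" using Q0_VV ApV by blast
  next
    fix a b u v show "Q0 ?M Ap (\<lambda>w. a * u w + b * v w) = (\<lambda>w. a * Q0 ?M Ap u w + b * Q0 ?M Ap v w)"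
      by (rule Q0_lin)
  next
    fix u v assume "u \<in> VV ?M" "v \<in> VV ?M"
    then show "dotf n e u v = brak n e u (Q0 ?M Ap v)"
      using Sop_Q0[OF finite_Mset ApS] by (simp add: brak_plus dotf_def)
  qed
  have exm: "is_Qminus n e (Q0 ?M Am)"
    unfolding is_Qminus_def linear_on_V_def Vsp_VV
  proof (intro conjI ballI allI)
    fix v assume "v \<in> VV ?M" then show "Q0 ?M Am v \<in> VV ?M" using Q0_VV AmV by blast
  next
    fix a b u v show "Q0 ?M Am (\<lambda>w. a * u w + b * v w) = (\<lambda>w. a * Q0 ?M Am u w + b * Q0 ?M Am v w)"
      by (rule Q0_lin)
  next
    fix u v assume "u \<in> VV ?M" "v \<in> VV ?M"
    then show "dotf n e u v = brak n e (Q0 ?M Am u) v"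
      using Sop_Q0[OF finite_Mset AmS] by (simp add: brak_minus dotf_def mult.commute)
  qed
  have P: "bij_betw Q (Vsp n e) (Vsp n e) \<and>
       (\<forall>w\<in>Mset n e.
          Q (delta w) = altsum (Ey w) w \<and>
          Q (\<lambda>w'. if w' \<in> Mset n e \<and> wle w' w then 1 else 0) = delta w \<and>
          (\<forall>w'. Q (delta w) w' \<in> \<int>))" if Q: "is_Qplus n e Q" for Q
  proof -
    note F = final[OF finite_Mset reflp potp ApV ApS plus_char[OF Q]]
    have S: "Sop ?M wle (delta w) = (\<lambda>w'. if w' \<in> ?M \<and> wle w' w then 1 else 0)" if "w \<in> ?M" for w
      using that by (auto simp: Sop_def delta_def fun_eq_iff finite_Mset)
    show ?thesis using F S ints unfolding Vsp_VV Ap_def by simp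
  qed
  have M: "bij_betw Q (Vsp n e) (Vsp n e) \<and>
       (\<forall>w\<in>Mset n e.
          Q (delta w) = altsum (Ex w) w \<and>
          Q (\<lambda>w'. if w' \<in> Mset n e \<and> wle w w' then 1 else 0) = delta w \<and>
          (\<forall>w'. Q (delta w) w' \<in> \<int>))" if Q: "is_Qminus n e Q" for Q
  proof -
    note F = final[OF finite_Mset reflm potm AmV AmS minus_char[OF Q]]
    have S: "Sop ?M (\<lambda>a b. wle b a) (delta w) = (\<lambda>w'. if w' \<in> ?M \<and> wle w w' then 1 else 0)"
      if "w \<in> ?M" for w
      using that by (auto simp: Sop_def delta_def fun_eq_iff finite_Mset)
    show ?thesis using F S ints unfolding Vsp_VV Am_def by simp
  qed
  show ?thesis
  proof (intro conjI)
    show "\<exists>Q. is_Qplus n e Q" using exp by blast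
    show "\<exists>Q. is_Qminus n e Q" using exm by blast
  qed (intro allI impI, erule P, intro allI impI, erule M)
qed

end
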